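(* A diamond-free graph is minimally unbalanced if and only if it is either an odd hole or an HOH-free multisun.
   Context: A $\{0,1\}$-matrix is balanced if it has no square submatrix of odd order with exactly two 1's in every row and every column. The clique-matrix $A_G$ of a graph $G$ has columns indexed by $V(G)$ and rows the incidence vectors of the maximal cliques of $G$. A graph is balanced if its clique-matrix is balanced; it is minimally unbalanced if it is not balanced but every proper induced subgraph is balanced. A graph is diamond-free if it has no induced subgraph isomorphic to $K_4$ minus an edge. An odd hole is an induced cycle of odd length at least $5$. A multisun is a diamond-free graph $G$ of odd order whose maximal cliques of size $2$ form the edge set of a Hamiltonian cycle $C$ of $G$ (the rim); all other maximal cliques consist of pairwise nonconsecutive vertices of $C$ and are called inscribed cliques. A sub-multisun of $G$ is obtained by deleting the edge sets of some, but not all, inscribed cliques. $G$ is HOH-free if neither $G$ nor any of its sub-multisuns contains an odd hole as an induced subgraph. *)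

theory Defs
  imports Main
begin

definition graph :: "'a set \<Rightarrow> 'a set set \<Rightarrow> bool" where
  "graph V E \<longleftrightarrow> finite V \<and> (\<forall>e\<in>E. e \<subseteq> V \<and> card e = 2)"

definition adj :: "'a set set \<Rightarrow> 'a \<Rightarrow> 'a \<Rightarrow> bool" where
  "adj E u v \<longleftrightarrow> {u, v} \<in> E"

definition induced_edges :: "'a set set \<Rightarrow> 'a set \<Rightarrow> 'a set set" where
  "induced_edges E S = {e \<in> E. e \<subseteq> S}"

definition is_clique :: "'a set \<Rightarrow> 'a set set \<Rightarrow> 'a set \<Rightarrow> bool" where
  "is_clique V E K \<longleftrightarrow> K \<subseteq> V \<and> (\<forall>u\<in>K. \<forall>v\<in>K. u \<noteq> v \<longrightarrow> adj E u v)"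

definition maximal_clique :: "'a set \<Rightarrow> 'a set set \<Rightarrow> 'a set \<Rightarrow> bool" where
  "maximal_clique V E K \<longleftrightarrow> is_clique V E K \<and> (\<forall>K'. is_clique V E K' \<and> K \<subseteq> K' \<longrightarrow> K' = K)"

definition balanced_matrix :: "'r set \<Rightarrow> 'c set \<Rightarrow> ('r \<Rightarrow> 'c \<Rightarrow> bool) \<Rightarrow> bool" where
  "balanced_matrix Rows Cols M \<longleftrightarrow>
     \<not> (\<exists>R C. R \<subseteq> Rows \<and> C \<subseteq> Cols \<and> finite R \<and> finite C \<and>
            card R = card C \<and> odd (card C) \<and>
            (\<forall>r\<in>R. card {c\<in>C. M r c} = 2) \<and>
            (\<forall>c\<in>C. card {r\<in>R. M r c} = 2))"

text \<open>Clique matrix: rows indexed by the maximal cliques, columns by the vertices,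
  row K is the incidence vector of K.\<close>
definition balanced_graph :: "'a set \<Rightarrow> 'a set set \<Rightarrow> bool" where
  "balanced_graph V E \<longleftrightarrow> balanced_matrix {K. maximal_clique V E K} V (\<lambda>K v. v \<in> K)"

definition minimally_unbalanced :: "'a set \<Rightarrow> 'a set set \<Rightarrow> bool" where
  "minimally_unbalanced V E \<longleftrightarrow> \<not> balanced_graph V E \<and>
     (\<forall>S. S \<subset> V \<longrightarrow> balanced_graph S (induced_edges E S))"

definition diamond_free :: "'a set \<Rightarrow> 'a set set \<Rightarrow> bool" where
  "diamond_free V E \<longleftrightarrow> \<not> (\<exists>a\<in>V. \<exists>b\<in>V. \<exists>c\<in>V. \<exists>d\<in>V. distinct [a, b, c, d] \<and>
      adj E a b \<and> adj E a c \<and> adj E a d \<and> adj E b c \<and> adj E b d \<and> \<not> adj E c d)"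

definition cycle_edges :: "'a list \<Rightarrow> 'a set set" where
  "cycle_edges vs = {{vs ! i, vs ! ((i + 1) mod length vs)} | i. i < length vs}"

definition odd_hole :: "'a set \<Rightarrow> 'a set set \<Rightarrow> bool" where
  "odd_hole V E \<longleftrightarrow> (\<exists>vs. distinct vs \<and> set vs = V \<and> length vs \<ge> 5 \<and> odd (length vs) \<and>
      E = cycle_edges vs)"

definition contains_odd_hole :: "'a set \<Rightarrow> 'a set set \<Rightarrow> bool" where
  "contains_odd_hole V E \<longleftrightarrow> (\<exists>S\<subseteq>V. odd_hole S (induced_edges E S))"

definition multisun :: "'a set \<Rightarrow> 'a set set \<Rightarrow> bool" where
  "multisun V E \<longleftrightarrow> diamond_free V E \<and> odd (card V) \<and>
     (\<exists>vs. distinct vs \<and> set vs = V \<and> length vs \<ge> 3 \<and> cycle_edges vs \<subseteq> E \<and>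
        {K. maximal_clique V E K \<and> card K = 2} = cycle_edges vs \<and>
        (\<forall>K. maximal_clique V E K \<and> card K \<noteq> 2 \<longrightarrow>
             (\<forall>u\<in>K. \<forall>v\<in>K. u \<noteq> v \<longrightarrow> {u, v} \<notin> cycle_edges vs)))"

text \<open>Inscribed cliques: maximal cliques other than the rim edges (the size-2 maximal cliques).\<close>
definition inscribed_cliques :: "'a set \<Rightarrow> 'a set set \<Rightarrow> 'a set set" where
  "inscribed_cliques V E = {K. maximal_clique V E K \<and> card K \<noteq> 2}"

definition clique_edges :: "'a set \<Rightarrow> 'a set set" where
  "clique_edges K = {e. e \<subseteq> K \<and> card e = 2}"

definition sub_multisun_edges :: "'a set \<Rightarrow> 'a set set \<Rightarrow> 'a set set \<Rightarrow> bool" where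
  "sub_multisun_edges V E E' \<longleftrightarrow> (\<exists>D. D \<noteq> {} \<and> D \<subset> inscribed_cliques V E \<and>
      E' = E - \<Union> (clique_edges ` D))"

definition HOH_free :: "'a set \<Rightarrow> 'a set set \<Rightarrow> bool" where
  "HOH_free V E \<longleftrightarrow> \<not> contains_odd_hole V E \<and>
     (\<forall>E'. sub_multisun_edges V E E' \<longrightarrow> \<not> contains_odd_hole V E')"

end

theory Submission
  imports Defs
begin

definition gcyc :: "('a \<Rightarrow> 'a \<Rightarrow> bool) \<Rightarrow> 'a list \<Rightarrow> bool" where
  "gcyc P ws \<longleftrightarrow> distinct ws \<and> 3 \<le> length ws \<and>
     (\<forall>i<length ws. P (ws!i) (ws!(Suc i mod length ws)))"

lemma suc_mod: "i < k \<Longrightarrow> Suc i mod k = (if Suc i = k then 0 else Suc i)"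
  by auto

lemma gcyc_rotate: "gcyc P ws \<Longrightarrow> gcyc P (rotate n ws)"
proof -
  assume g: "gcyc P ws"
  let ?k = "length ws"
  have k: "?k \<ge> 3" using g by (simp add: gcyc_def)
  show ?thesis unfolding gcyc_def
  proof (intro conjI allI impI)
    show "distinct (rotate n ws)" using g by (simp add: gcyc_def)
    show "3 \<le> length (rotate n ws)" using k by simp
    fix i assume i: "i < length (rotate n ws)"
    hence i': "i < ?k" by simp
    have "Suc i mod ?k < ?k" using k by (intro mod_less_divisor) auto
    hence e2: "rotate n ws ! (Suc i mod length (rotate n ws)) = ws ! ((n + Suc i mod ?k) mod ?k)"
      by (simp add: nth_rotate)
    have "(n + Suc i mod ?k) mod ?k = Suc ((n + i) mod ?k) mod ?k"
      by (metis add_Suc_right mod_Suc_eq mod_add_right_eq)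
    moreover have "(n + i) mod ?k < ?k" using k by (intro mod_less_divisor) auto
    ultimately show "P (rotate n ws ! i) (rotate n ws ! (Suc i mod length (rotate n ws)))"
      using g e2 i' by (simp add: gcyc_def nth_rotate)
  qed
qed

lemma gcyc_append2:
  assumes "distinct ws" "ws \<noteq> []" "\<forall>m. Suc m < length ws \<longrightarrow> P (ws!m) (ws!Suc m)"
    "P (last ws) x" "P x y" "P y (hd ws)" "x \<notin> set ws" "y \<notin> set ws" "x \<noteq> y"
  shows "gcyc P (ws @ [x,y])"
  unfolding gcyc_def
proof (intro conjI allI impI)
  show "distinct (ws @ [x, y])" using assms by simp
  show "3 \<le> length (ws @ [x, y])" using assms by (cases ws) auto
  fix i assume i: "i < length (ws @ [x, y])"
  let ?k = "length ws"
  have k: "?k \<ge> 1" using assms by (cases ws) auto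
  have L: "last ws = ws ! (?k - 1)" "hd ws = ws ! 0" using assms by (auto simp: last_conv_nth hd_conv_nth)
  have i2: "i < ?k + 2" using i by simp
  consider "Suc i < ?k" | "Suc i = ?k" | "i = ?k" | "i = Suc ?k" using i2 by linarith
  then show "P ((ws @ [x, y]) ! i) ((ws @ [x, y]) ! (Suc i mod length (ws @ [x, y])))"
  proof cases
    case 1 then show ?thesis using assms by (simp add: nth_append)
  next
    case 2 then have "i = ?k - 1" by simp
    then show ?thesis using assms L 2 by (simp add: nth_append)
  next
    case 3 then show ?thesis using assms L by (simp add: nth_append)
  next
    case 4 then show ?thesis using assms L k by (simp add: nth_append)
  qed
qed

lemma pair_unique:
  assumes "distinct ws" "3 \<le> length ws" "i < length ws" "j < length ws"
    "{ws!i, ws!(Suc i mod length ws)} = {ws!j, ws!(Suc j mod length ws)}"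
  shows "i = j"
proof -
  let ?k = "length ws"
  have kp: "0 < ?k" using assms(2) by linarith
  have si: "Suc i mod ?k < ?k" "Suc j mod ?k < ?k" using kp by simp_all
  have "ws!i = ws!j \<or> (ws!i = ws!(Suc j mod ?k) \<and> ws!(Suc i mod ?k) = ws!j)"
    using assms(5) by (auto simp: doubleton_eq_iff)
  moreover have "ws!i = ws!j \<Longrightarrow> i = j" using assms by (simp add: nth_eq_iff_index_eq)
  moreover have False if "ws!i = ws!(Suc j mod ?k)" "ws!(Suc i mod ?k) = ws!j"
  proof -
    have "i = Suc j mod ?k" "Suc i mod ?k = j" using that assms si by (simp_all add: nth_eq_iff_index_eq)
    then show False using assms(2,3,4) by (auto simp: suc_mod split: if_splits)
  qed
  ultimately show ?thesis by blast
qed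

lemma card2_other: "card A = 2 \<Longrightarrow> a \<in> A \<Longrightarrow> \<exists>d. A = {a,d} \<and> d \<noteq> a"
  by (auto simp: card_2_iff)

lemma card2_eq: "card A = 2 \<Longrightarrow> x \<in> A \<Longrightarrow> y \<in> A \<Longrightarrow> x \<noteq> y \<Longrightarrow> A = {x,y}"
  by (auto simp: card_2_iff)

lemma two_reg_odd_cycle:
  assumes "finite C" "odd (card C)" "\<And>x. x \<in> C \<Longrightarrow> card {y\<in>C. N x y} = 2"
    "\<And>x y. N x y \<Longrightarrow> N y x" "\<And>x. \<not> N x x"
  shows "\<exists>ws. gcyc N ws \<and> odd (length ws) \<and> set ws \<subseteq> C"
  using assms
proof (induction "card C" arbitrary: C N rule: less_induct)
  case less
  note fin = less.prems(1) and od = less.prems(2) and deg = less.prems(3)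
    and sym = less.prems(4) and irr = less.prems(5)
  have "C \<noteq> {}" using od by auto
  then obtain a where aC: "a \<in> C" by auto
  obtain b c where nba: "{y\<in>C. N a y} = {b,c}" "b \<noteq> c"
    using deg[OF aC] unfolding card_2_iff by blast
  have bc: "b \<in> C" "N a b" "c \<in> C" "N a c" using nba(1) by blast+
  have "a \<in> {y\<in>C. N b y}" using aC bc sym by blast
  then obtain d where nbb: "{y\<in>C. N b y} = {a,d}" "d \<noteq> a"
    using card2_other deg[OF bc(1)] by metis
  have dd: "d \<in> C" "N b d" using nbb(1) by blast+
  have ab: "a \<noteq> b" "a \<noteq> c" "b \<noteq> d" using bc dd irr by metis+
  show ?case
  proof (cases "d = c")
    case True
    have "gcyc N [a,b,c]"
      unfolding gcyc_def
    proof (intro conjI allI impI)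
      show "distinct [a,b,c]" using ab nba(2) by auto
      fix i assume "i < length [a,b,c]"
      hence "i = 0 \<or> i = 1 \<or> i = 2" by auto
      then show "N ([a, b, c] ! i) ([a, b, c] ! (Suc i mod length [a, b, c]))"
        using bc dd True sym by auto
    qed simp
    then show ?thesis using aC bc by (intro exI[of _ "[a,b,c]"]) auto
  next
    case dc: False
    show ?thesis
    proof (cases "N c d")
      case True
      have nbc: "{y\<in>C. N c y} = {a,d}"
        using card2_eq[OF deg[OF bc(3)], of a d] aC dd True sym bc nbb(2) by simp
      have nbd: "{y\<in>C. N d y} = {b,c}"
        using card2_eq[OF deg[OF dd(1)], of b c] bc dd True sym nba(2) by simp
      define C' where "C' = C - {a,b,c,d}"
      have sub: "{a,b,c,d} \<subseteq> C" using aC bc dd by auto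
      have c4: "card {a,b,c,d} = 4" using ab nba(2) dc nbb(2) by auto
      have cC': "card C' = card C - 4" unfolding C'_def using card_Diff_subset[OF _ sub] c4 by simp
      have "card C \<ge> 4" using card_mono[OF fin sub] c4 by simp
      hence o': "odd (card C')" using od cC' by presburger
      have lt: "card C' < card C" using cC' \<open>card C \<ge> 4\<close> by simp
      have deg': "card {y\<in>C'. N x y} = 2" if "x \<in> C'" for x
      proof -
        have "{y\<in>C'. N x y} = {y\<in>C. N x y}"
        proof (intro set_eqI iffI)
          fix y assume "y \<in> {y\<in>C. N x y}"
          hence y: "y \<in> C" "N x y" by auto
          have "y \<noteq> a" using y that sym nba(1) unfolding C'_def by blast
          moreover have "y \<noteq> b" using y that sym nbb(1) unfolding C'_def by blast
          moreover have "y \<noteq> c" using y that sym nbc unfolding C'_def by blast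
          moreover have "y \<noteq> d" using y that sym nbd unfolding C'_def by blast
          ultimately show "y \<in> {y\<in>C'. N x y}" using y unfolding C'_def by auto
        qed (auto simp: C'_def)
        then show ?thesis using deg that unfolding C'_def by auto
      qed
      have "finite C'" using fin unfolding C'_def by auto
      from less.hyps[OF lt this o' deg' sym irr] obtain ws where
        "gcyc N ws" "odd (length ws)" "set ws \<subseteq> C'" by blast
      then show ?thesis unfolding C'_def by blast
    next
      case ncd: False
      have "a \<in> {y\<in>C. N c y}" using aC bc sym by blast
      then obtain e where nbc: "{y\<in>C. N c y} = {a,e}" "e \<noteq> a"
        using card2_other deg[OF bc(3)] by metis
      have "b \<in> {y\<in>C. N d y}" using bc dd sym by blast
      then obtain f where nbd: "{y\<in>C. N d y} = {b,f}" "f \<noteq> b"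
        using card2_other deg[OF dd(1)] by metis
      have ee: "e \<in> C" "N c e" using nbc(1) by blast+
      have ff: "f \<in> C" "N d f" using nbd(1) by blast+
      have eb: "e \<noteq> b"
      proof
        assume "e = b"
        hence "c \<in> {y\<in>C. N b y}" using ee sym bc by auto
        thus False using nbb(1) ab dc by auto
      qed
      have ed: "e \<noteq> d" using ee ncd by auto
      have fa: "f \<noteq> a"
      proof
        assume "f = a"
        hence "d \<in> {y\<in>C. N a y}" using ff sym dd by auto
        thus False using nba(1) ab dc by auto
      qed
      have fc: "f \<noteq> c" using ff ncd sym by auto
      define N' where "N' x y \<longleftrightarrow> N x y \<or> (x = c \<and> y = d) \<or> (x = d \<and> y = c)" for x y
      define C' where "C' = C - {a,b}"
      have sym': "N' x y \<Longrightarrow> N' y x" for x y using sym unfolding N'_def by blast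
      have irr': "\<not> N' x x" for x using irr dc unfolding N'_def by blast
      have cd': "c \<in> C'" "d \<in> C'" "e \<in> C'" "f \<in> C'"
        using ab dc nba(2) eb ed fa fc ee ff nbc(2) nbd(2) nbb(2) bc dd unfolding C'_def by auto
      have deg': "card {y\<in>C'. N' x y} = 2" if x: "x \<in> C'" for x
      proof (cases "x = c")
        case True
        have "{y\<in>C'. N' x y} = {e,d}"
        proof (intro set_eqI iffI)
          fix y assume "y \<in> {y\<in>C'. N' x y}"
          hence "y \<in> C'" "N c y \<or> y = d" using True dc unfolding N'_def by auto
          thus "y \<in> {e,d}" using nbc(1) unfolding C'_def by blast
        qed (use True cd' ee in \<open>auto simp: N'_def\<close>)
        then show ?thesis using ed by simp
      next
        case xc: False
        show ?thesis
        proof (cases "x = d")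
          case True
          have "{y\<in>C'. N' x y} = {f,c}"
          proof (intro set_eqI iffI)
            fix y assume "y \<in> {y\<in>C'. N' x y}"
            hence "y \<in> C'" "N d y \<or> y = c" using True dc unfolding N'_def by auto
            thus "y \<in> {f,c}" using nbd(1) unfolding C'_def by blast
          qed (use True cd' ff in \<open>auto simp: N'_def\<close>)
          then show ?thesis using fc by simp
        next
          case xd: False
          have "{y\<in>C'. N' x y} = {y\<in>C. N x y}"
          proof (intro set_eqI iffI)
            fix y assume "y \<in> {y\<in>C. N x y}"
            hence y: "y \<in> C" "N x y" by auto
            have "y \<noteq> a" using y x xc sym nba(1) unfolding C'_def by blast
            moreover have "y \<noteq> b" using y x xd sym nbb(1) unfolding C'_def by blast
            ultimately show "y \<in> {y\<in>C'. N' x y}" using y unfolding C'_def N'_def by auto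
          qed (use xc xd in \<open>auto simp: C'_def N'_def\<close>)
          then show ?thesis using deg x unfolding C'_def by auto
        qed
      qed
      have sub: "{a,b} \<subseteq> C" using aC bc by auto
      have cC': "card C' = card C - 2" unfolding C'_def using card_Diff_subset[OF _ sub] ab by simp
      have "{a,b,c} \<subseteq> C" using aC bc by auto
      hence "card {a,b,c} \<le> card C" using fin card_mono by blast
      hence "card C \<ge> 3" using ab nba(2) by simp
      hence o': "odd (card C')" using od cC' by presburger
      have lt: "card C' < card C" using cC' \<open>card C \<ge> 3\<close> by simp
      have "finite C'" using fin unfolding C'_def by auto
      from less.hyps[OF lt this o' deg' sym' irr'] obtain ws where
        ws: "gcyc N' ws" "odd (length ws)" "set ws \<subseteq> C'" by blast
      let ?k = "length ws"
      have k3: "?k \<ge> 3" and dws: "distinct ws" using ws(1) unfolding gcyc_def by auto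
      show ?thesis
      proof (cases "\<forall>i<?k. N (ws!i) (ws!(Suc i mod ?k))")
        case True
        then have "gcyc N ws" using ws(1) unfolding gcyc_def by auto
        then show ?thesis using ws unfolding C'_def by blast
      next
        case False
        then obtain i where i: "i < ?k" "\<not> N (ws!i) (ws!(Suc i mod ?k))" by blast
        have "N' (ws!i) (ws!(Suc i mod ?k))" using ws(1) i unfolding gcyc_def by auto
        hence cdcase: "(ws!i = c \<and> ws!(Suc i mod ?k) = d) \<or> (ws!i = d \<and> ws!(Suc i mod ?k) = c)"
          using i unfolding N'_def by auto
        define ws2 where "ws2 = rotate (Suc i mod ?k) ws"
        have g2: "gcyc N' ws2" using ws(1) gcyc_rotate unfolding ws2_def by blast
        have l2: "length ws2 = ?k" unfolding ws2_def by simp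
        have e1: "ws2 ! (?k - 1) = ws ! i"
        proof -
          have "ws2 ! (?k - 1) = ws ! ((Suc i mod ?k + (?k - 1)) mod ?k)"
            unfolding ws2_def using k3 by (simp add: nth_rotate)
          moreover have "(Suc i mod ?k + (?k - 1)) mod ?k = i"
          proof (cases "Suc i = ?k")
            case True then show ?thesis by simp
          next
            case False
            then have "Suc i mod ?k + (?k - 1) = i + ?k" using i k3 by simp
            then show ?thesis using i by simp
          qed
          ultimately show ?thesis by simp
        qed
        have e0: "ws2 ! 0 = ws ! (Suc i mod ?k)"
          unfolding ws2_def using k3 nth_rotate[of 0 ws "Suc i mod ?k"] by (cases ws) auto
        have nonwrap: "\<forall>m. Suc m < length ws2 \<longrightarrow> N (ws2!m) (ws2!Suc m)"
        proof (intro allI impI)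
          fix m assume m: "Suc m < length ws2"
          have sm: "Suc m mod ?k = Suc m" using m l2 by simp
          have mk: "m < ?k" using m l2 by simp
          have n': "N' (ws2!m) (ws2!(Suc m mod ?k))" using g2 mk l2 unfolding gcyc_def by metis
          show "N (ws2!m) (ws2!Suc m)"
          proof (rule ccontr)
            assume nn: "\<not> N (ws2!m) (ws2!Suc m)"
            have "Suc (?k - 1) = ?k" using k3 by simp
            hence wr: "Suc (?k - 1) mod ?k = 0" by simp
            have "{ws2!m, ws2!(Suc m mod ?k)} = {ws2!(?k-1), ws2!(Suc (?k-1) mod ?k)}"
              using n' nn sm e1 e0 cdcase k3 wr unfolding N'_def by auto
            hence "m = ?k - 1" using pair_unique[of ws2 m "?k - 1"] g2 l2 m k3 unfolding gcyc_def by auto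
            thus False using m l2 by simp
          qed
        qed
        have ne2: "ws2 \<noteq> []" using l2 k3 by auto
        have lh: "last ws2 = ws ! i" "hd ws2 = ws ! (Suc i mod ?k)"
          using e1 e0 ne2 l2 by (auto simp: last_conv_nth hd_conv_nth)
        have d2: "distinct ws2" using g2 unfolding gcyc_def by auto
        have ab2: "a \<notin> set ws2" "b \<notin> set ws2" using ws(3) unfolding ws2_def C'_def by auto
        from cdcase show ?thesis
        proof
          assume h: "ws!i = c \<and> ws!(Suc i mod ?k) = d"
          have "gcyc N (ws2 @ [a,b])"
            by (rule gcyc_append2[OF d2 ne2 nonwrap]) (use h lh bc dd sym ab ab2 in auto)
          moreover have "odd (length (ws2 @ [a,b]))" using l2 ws(2) by simp
          moreover have "set (ws2 @ [a,b]) \<subseteq> C" using ws(3) aC bc unfolding ws2_def C'_def by auto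
          ultimately show ?thesis by blast
        next
          assume h: "ws!i = d \<and> ws!(Suc i mod ?k) = c"
          have "gcyc N (ws2 @ [b,a])"
            by (rule gcyc_append2[OF d2 ne2 nonwrap]) (use h lh bc dd sym ab ab2 in auto)
          moreover have "odd (length (ws2 @ [b,a]))" using l2 ws(2) by simp
          moreover have "set (ws2 @ [b,a]) \<subseteq> C" using ws(3) aC bc unfolding ws2_def C'_def by auto
          ultimately show ?thesis by blast
        qed
      qed
    qed
  qed
qed

lemma adj_sym: "adj E u v = adj E v u"
  unfolding adj_def by (simp add: insert_commute)

lemma adj_induced: "adj (induced_edges E S) u v \<longleftrightarrow> adj E u v \<and> u \<in> S \<and> v \<in> S"
  unfolding adj_def induced_edges_def by auto

lemma graph_no_loop: "graph V E \<Longrightarrow> \<not> adj E x x"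
  unfolding graph_def adj_def by fastforce

lemma graph_adj_in: "graph V E \<Longrightarrow> adj E x y \<Longrightarrow> x \<in> V \<and> y \<in> V"
  unfolding graph_def adj_def by blast

lemma graph_induced_all: "graph V E \<Longrightarrow> induced_edges E V = E"
  unfolding graph_def induced_edges_def by auto

lemma diamond_free_induced: "diamond_free V E \<Longrightarrow> S \<subseteq> V \<Longrightarrow> diamond_free S (induced_edges E S)"
  unfolding diamond_free_def adj_induced by blast

lemma MC2:
  assumes df: "diamond_free V0 E0" and m1: "maximal_clique V0 E0 K1" and m2: "maximal_clique V0 E0 K2"
    and xy: "x \<noteq> y" "x \<in> K1" "y \<in> K1" "x \<in> K2" "y \<in> K2"
  shows "K1 = K2"
proof (rule ccontr)
  assume ne: "K1 \<noteq> K2"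
  have "\<not> K1 \<subseteq> K2" using m1 m2 ne unfolding maximal_clique_def by blast
  then obtain p where p: "p \<in> K1" "p \<notin> K2" by blast
  have c1: "is_clique V0 E0 K1" and c2: "is_clique V0 E0 K2" using m1 m2 unfolding maximal_clique_def by auto
  have "\<not> is_clique V0 E0 (insert p K2)"
  proof
    assume "is_clique V0 E0 (insert p K2)"
    hence "insert p K2 = K2" using m2 unfolding maximal_clique_def by blast
    thus False using p by blast
  qed
  moreover have "insert p K2 \<subseteq> V0" using c1 c2 p unfolding is_clique_def by blast
  ultimately obtain q where q: "q \<in> K2" "q \<noteq> p" "\<not> adj E0 p q"
    using c2 unfolding is_clique_def by (auto simp: adj_sym)
  have a2: "adj E0 x p" "adj E0 y p" using c1 xy p unfolding is_clique_def by (metis)+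
  have qq: "q \<noteq> x" "q \<noteq> y" using q a2 adj_sym by metis+
  have a1: "adj E0 x y" "adj E0 x q" "adj E0 y q" using c2 xy q qq unfolding is_clique_def by (metis adj_sym)+
  note qq
  moreover have "p \<noteq> x" "p \<noteq> y" using p xy by auto
  moreover have "x \<in> V0" "y \<in> V0" "p \<in> V0" "q \<in> V0" using c1 c2 xy p q unfolding is_clique_def by auto
  ultimately show False using df xy a1 a2 q unfolding diamond_free_def
    by (metis (no_types, lifting) distinct_length_2_or_more distinct_singleton)
qed

lemma ExMax:
  assumes "finite V0" "is_clique V0 E0 K"
  shows "\<exists>Q. maximal_clique V0 E0 Q \<and> K \<subseteq> Q"
proof -
  let ?A = "{K'. is_clique V0 E0 K' \<and> K \<subseteq> K'}"
  have "?A \<subseteq> Pow V0" unfolding is_clique_def by auto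
  hence fA: "finite ?A" using assms(1) by (meson finite_Pow_iff finite_subset)
  have "K \<in> ?A" using assms(2) by auto
  then obtain m where m: "m \<in> ?A" "\<forall>b\<in>?A. m \<subseteq> b \<longrightarrow> m = b"
    using finite_has_maximal[OF fA] by blast
  hence "maximal_clique V0 E0 m" unfolding maximal_clique_def using order_trans by blast
  thus ?thesis using m by blast
qed

definition okp :: "'a set set \<Rightarrow> 'a set \<Rightarrow> 'a \<Rightarrow> 'a \<Rightarrow> bool" where
  "okp E T x y \<longleftrightarrow> {x,y} \<in> E \<and> \<not> (\<exists>z\<in>T. adj E x z \<and> adj E y z)"

definition ocyc :: "'a set \<Rightarrow> 'a set set \<Rightarrow> 'a list \<Rightarrow> bool" where
  "ocyc V E ws \<longleftrightarrow> gcyc (okp E (set ws)) ws \<and> odd (length ws) \<and> set ws \<subseteq> V"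

lemma cycle_edges_eq: "cycle_edges ws = (\<lambda>i. {ws!i, ws!(Suc i mod length ws)}) ` {..<length ws}"
  unfolding cycle_edges_def by auto

lemma card_cycle_edges:
  assumes "distinct ws" "3 \<le> length ws"
  shows "card (cycle_edges ws) = length ws"
proof -
  have "inj_on (\<lambda>i. {ws!i, ws!(Suc i mod length ws)}) {..<length ws}"
    using pair_unique[OF assms] by (auto simp: inj_on_def)
  thus ?thesis unfolding cycle_edges_eq by (simp add: card_image)
qed

lemma prev_idx: "i < k \<Longrightarrow> j < k \<Longrightarrow> (Suc j mod k = i) \<longleftrightarrow> (j = (if i = 0 then k - 1 else i - 1))"
proof -
  assume a: "i < k" "j < k"
  show ?thesis
  proof (cases "Suc j = k")
    case True
    then have "Suc j mod k = 0" by simp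
    then show ?thesis using True a by auto
  next
    case False
    then have "Suc j mod k = Suc j" using a by simp
    then show ?thesis using False a by auto
  qed
qed

lemma extract_cyc:
  assumes g: "graph V E" and df: "diamond_free V E" and S: "S \<subseteq> V"
    and nb: "\<not> balanced_graph S (induced_edges E S)"
  shows "\<exists>ws. ocyc V E ws \<and> set ws \<subseteq> S"
proof -
  let ?E = "induced_edges E S"
  have dfS: "diamond_free S ?E" using diamond_free_induced[OF df S] .
  have finS: "finite S" using g S unfolding graph_def by (auto intro: finite_subset)
  obtain R C where RC: "R \<subseteq> {K. maximal_clique S ?E K}" "C \<subseteq> S" "finite R" "finite C"
    "card R = card C" "odd (card C)" "\<forall>r\<in>R. card {c\<in>C. c \<in> r} = 2"
    "\<forall>c\<in>C. card {r\<in>R. c \<in> r} = 2"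
    using nb unfolding balanced_graph_def balanced_matrix_def by blast
  define N where "N x y \<longleftrightarrow> x \<noteq> y \<and> (\<exists>r\<in>R. x \<in> r \<and> y \<in> r)" for x y
  have uniq: "r1 = r2" if "r1 \<in> R" "r2 \<in> R" "x \<noteq> y" "x \<in> r1" "y \<in> r1" "x \<in> r2" "y \<in> r2" for r1 r2 x y
    using MC2[OF dfS, of r1 r2 x y] that RC(1) by blast
  have deg: "card {y\<in>C. N x y} = 2" if xC: "x \<in> C" for x
  proof -
    have "card {r\<in>R. x \<in> r} = 2" using RC(8) xC by blast
    then obtain r1 r2 where r12: "{r\<in>R. x \<in> r} = {r1,r2}" "r1 \<noteq> r2"
      unfolding card_2_iff by blast
    have r1: "r1 \<in> R" "x \<in> r1" and r2: "r2 \<in> R" "x \<in> r2" using r12(1) by blast+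
    have xr1: "x \<in> {c\<in>C. c \<in> r1}" using xC r1 by blast
    have cr1: "card {c\<in>C. c \<in> r1} = 2" using RC(7) r1 by blast
    obtain y1 where y1: "{c\<in>C. c \<in> r1} = {x,y1}" "y1 \<noteq> x"
      using card2_other[OF cr1 xr1] by blast
    have xr2: "x \<in> {c\<in>C. c \<in> r2}" using xC r2 by blast
    have cr2: "card {c\<in>C. c \<in> r2} = 2" using RC(7) r2 by blast
    obtain y2 where y2: "{c\<in>C. c \<in> r2} = {x,y2}" "y2 \<noteq> x"
      using card2_other[OF cr2 xr2] by blast
    have y12: "y1 \<noteq> y2"
    proof
      assume "y1 = y2"
      hence "r1 = r2" using uniq[of r1 r2 x y1] r1 r2 y1 y2 by blast
      thus False using r12 by simp
    qed
    have "{y\<in>C. N x y} = {y1,y2}"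
    proof (intro set_eqI iffI)
      fix y assume "y \<in> {y\<in>C. N x y}"
      hence yC: "y \<in> C" and "N x y" by auto
      then obtain r where r: "x \<noteq> y" "r \<in> R" "x \<in> r" "y \<in> r" unfolding N_def by auto
      hence "r \<in> {r\<in>R. x \<in> r}" by simp
      hence "r = r1 \<or> r = r2" using r12(1) by simp
      moreover have "y \<in> {c\<in>C. c \<in> r}" using yC r by simp
      ultimately show "y \<in> {y1,y2}" using y1(1) y2(1) r(1) by auto
    next
      fix y assume "y \<in> {y1,y2}"
      moreover have "y1 \<in> C" "y1 \<in> r1" "y2 \<in> C" "y2 \<in> r2" using y1(1) y2(1) by blast+
      ultimately show "y \<in> {y\<in>C. N x y}" unfolding N_def using r1 r2 y1(2) y2(2) by auto
    qed
    thus ?thesis using y12 by simp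
  qed
  have sym: "N x y \<Longrightarrow> N y x" for x y unfolding N_def by blast
  have irr: "\<not> N x x" for x unfolding N_def by blast
  obtain ws where ws: "gcyc N ws" "odd (length ws)" "set ws \<subseteq> C"
    using two_reg_odd_cycle[OF RC(4) RC(6) deg sym irr] by blast
  have okN: "okp E (set ws) x y" if hx: "N x y" "x \<in> set ws" "y \<in> set ws" for x y
  proof -
    obtain r where r: "r \<in> R" "x \<in> r" "y \<in> r" "x \<noteq> y" using hx unfolding N_def by blast
    have mr: "maximal_clique S ?E r" using RC(1) r by blast
    hence "adj ?E x y" using r unfolding maximal_clique_def is_clique_def by blast
    hence exy: "{x,y} \<in> E" unfolding adj_def induced_edges_def by blast
    have "\<not> (\<exists>z\<in>set ws. adj E x z \<and> adj E y z)"
    proof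
      assume "\<exists>z\<in>set ws. adj E x z \<and> adj E y z"
      then obtain z where z: "z \<in> set ws" "adj E x z" "adj E y z" by blast
      have zC: "z \<in> C" using z ws(3) by blast
      have xyS: "x \<in> S" "y \<in> S" "z \<in> S" using hx ws(3) RC(2) zC by blast+
      have zx: "z \<noteq> x" "z \<noteq> y" using z graph_no_loop[OF g] by metis+
      have axy: "adj E x y" using exy unfolding adj_def .
      have "is_clique S ?E {x,y,z}"
        unfolding is_clique_def
      proof (intro conjI ballI impI)
        show "{x,y,z} \<subseteq> S" using xyS by auto
        fix u v assume uv: "u \<in> {x,y,z}" "v \<in> {x,y,z}" "u \<noteq> v"
        have "adj E u v" using uv axy z adj_sym[of E] by auto
        thus "adj ?E u v" using uv xyS adj_induced by fast
      qed
      then obtain Q where Q: "maximal_clique S ?E Q" "{x,y,z} \<subseteq> Q" using ExMax[OF finS] by blast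
      have "Q = r" using MC2[OF dfS Q(1) mr, of x y] Q r by blast
      hence "{x,y,z} \<subseteq> {c\<in>C. c \<in> r}" using Q zC hx ws(3) RC(2) by auto
      moreover have "card {x,y,z} = 3" using zx r by auto
      moreover have "finite {c\<in>C. c \<in> r}" using RC(4) by simp
      ultimately have "3 \<le> card {c\<in>C. c \<in> r}" using card_mono by metis
      thus False using RC(7) r by simp
    qed
    thus ?thesis unfolding okp_def using exy by blast
  qed
  have "gcyc (okp E (set ws)) ws"
    unfolding gcyc_def
  proof (intro conjI allI impI)
    show "distinct ws" "3 \<le> length ws" using ws(1) unfolding gcyc_def by auto
    fix i assume i: "i < length ws"
    hence "Suc i mod length ws < length ws" by (intro mod_less_divisor) auto
    hence "ws!(Suc i mod length ws) \<in> set ws" "ws!i \<in> set ws" using i by simp_all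
    moreover have "N (ws!i) (ws!(Suc i mod length ws))" using ws(1) i unfolding gcyc_def by blast
    ultimately show "okp E (set ws) (ws ! i) (ws ! (Suc i mod length ws))" using okN by blast
  qed
  thus ?thesis using ws RC(2) S unfolding ocyc_def by blast
qed

lemma cyc_unbal:
  assumes g: "graph V E" and oc: "ocyc V E ws"
  shows "\<not> balanced_graph (set ws) (induced_edges E (set ws))"
proof -
  let ?T = "set ws" and ?E = "induced_edges E (set ws)" and ?k = "length ws"
  define pr where "pr i = {ws!i, ws!(Suc i mod ?k)}" for i
  have gc: "gcyc (okp E ?T) ws" and dw: "distinct ws" and k3: "3 \<le> ?k"
    using oc unfolding ocyc_def gcyc_def by auto
  have sm: "Suc i mod ?k < ?k" for i using k3 by (intro mod_less_divisor) auto
  have okk: "okp E ?T (ws!i) (ws!(Suc i mod ?k))" if "i < ?k" for i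
    using gc that unfolding gcyc_def by blast
  have neq: "ws!i \<noteq> ws!(Suc i mod ?k)" if i: "i < ?k" for i
  proof
    assume "ws!i = ws!(Suc i mod ?k)"
    hence "i = Suc i mod ?k" using dw i sm nth_eq_iff_index_eq by metis
    thus False using i k3 by (auto simp: suc_mod split: if_splits)
  qed
  have maxc: "maximal_clique ?T ?E (pr i)" if i: "i < ?k" for i
  proof -
    have in1: "ws!i \<in> ?T" "ws!(Suc i mod ?k) \<in> ?T" using i sm by simp_all
    have e: "{ws!i, ws!(Suc i mod ?k)} \<in> E" using okk[OF i] unfolding okp_def by blast
    have cl: "is_clique ?T ?E (pr i)"
      unfolding is_clique_def pr_def using in1 e by (auto simp: adj_def induced_edges_def insert_commute)
    moreover have "K' = pr i" if hK: "is_clique ?T ?E K'" "pr i \<subseteq> K'" for K'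
    proof (rule ccontr)
      assume "K' \<noteq> pr i"
      then obtain z where z: "z \<in> K'" "z \<notin> pr i" using hK(2) by blast
      have zT: "z \<in> ?T" using hK(1) z unfolding is_clique_def by blast
      have "adj ?E (ws!i) z" "adj ?E (ws!(Suc i mod ?k)) z"
        using hK z unfolding is_clique_def pr_def by auto
      hence "adj E (ws!i) z" "adj E (ws!(Suc i mod ?k)) z" by (simp_all add: adj_induced)
      thus False using okk[OF i] zT unfolding okp_def by blast
    qed
    ultimately show ?thesis unfolding maximal_clique_def by blast
  qed
  have R: "cycle_edges ws = pr ` {..<?k}" unfolding cycle_edges_eq pr_def by simp
  have cardR: "card (cycle_edges ws) = card ?T"
    using card_cycle_edges[OF dw k3] distinct_card[OF dw] by simp
  have c2: "card {c \<in> ?T. c \<in> r} = 2" if hr: "r \<in> cycle_edges ws" for r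
  proof -
    obtain i where i: "i < ?k" "r = pr i" using hr R by blast
    have "{c \<in> ?T. c \<in> r} = r" using i sm unfolding pr_def by auto
    thus ?thesis using neq[OF i(1)] i unfolding pr_def by simp
  qed
  have r2: "card {r \<in> cycle_edges ws. c \<in> r} = 2" if hc: "c \<in> ?T" for c
  proof -
    obtain i where i: "i < ?k" "c = ws!i" using hc by (auto simp: in_set_conv_nth)
    define p where "p = (if i = 0 then ?k - 1 else i - 1)"
    have pk: "p < ?k" using i k3 unfolding p_def by auto
    have sp: "Suc p mod ?k = i" using prev_idx[OF i(1) pk] p_def by simp
    have "{r \<in> cycle_edges ws. c \<in> r} = {pr i, pr p}"
    proof (intro set_eqI iffI)
      fix r assume "r \<in> {r \<in> cycle_edges ws. c \<in> r}"
      then obtain j where j: "j < ?k" "r = pr j" "c \<in> pr j" using R by auto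
      hence "ws!i = ws!j \<or> ws!i = ws!(Suc j mod ?k)" using i unfolding pr_def by auto
      hence "i = j \<or> i = Suc j mod ?k" using dw i j sm nth_eq_iff_index_eq by metis
      hence "j = i \<or> j = p" using prev_idx[OF i(1) j(1)] p_def by auto
      thus "r \<in> {pr i, pr p}" using j by auto
    next
      fix r assume "r \<in> {pr i, pr p}"
      thus "r \<in> {r \<in> cycle_edges ws. c \<in> r}" using R i pk sp unfolding pr_def by auto
    qed
    moreover have "pr i \<noteq> pr p"
    proof
      assume "pr i = pr p"
      hence "i = p" using pair_unique[OF dw k3 i(1) pk] unfolding pr_def by simp
      hence "Suc i mod ?k = i" using sp by simp
      thus False using i k3 by (auto simp: suc_mod split: if_splits)
    qed
    ultimately show ?thesis by simp
  qed
  have "odd (card ?T)" using oc distinct_card[OF dw] unfolding ocyc_def by simp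
  moreover have "cycle_edges ws \<subseteq> {K. maximal_clique ?T ?E K}" using R maxc by auto
  moreover have "finite (cycle_edges ws)" using R by simp
  ultimately show ?thesis unfolding balanced_graph_def balanced_matrix_def
    using cardR c2 r2 by blast
qed

lemma gcyc_mono: "gcyc P ws \<Longrightarrow> (\<And>x y. P x y \<Longrightarrow> Q x y) \<Longrightarrow> gcyc Q ws"
  unfolding gcyc_def by blast

lemma okp_mono: "okp E T x y \<Longrightarrow> T' \<subseteq> T \<Longrightarrow> okp E T' x y"
  unfolding okp_def by blast

lemma okp_sym: "okp E T x y \<Longrightarrow> okp E T y x"
  unfolding okp_def by (auto simp: insert_commute)

lemma chord_split0:
  assumes g: "gcyc P ws" and j: "2 \<le> j" "j + 2 \<le> length ws"
    and p1: "P (ws!0) (ws!j)" and p2: "P (ws!j) (ws!0)"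
  shows "gcyc P (take (Suc j) ws) \<and> gcyc P (drop j ws @ [ws!0])"
proof -
  let ?k = "length ws"
  have dw: "distinct ws" and k3: "3 \<le> ?k" and ed: "\<And>i. i < ?k \<Longrightarrow> P (ws!i) (ws!(Suc i mod ?k))"
    using g unfolding gcyc_def by auto
  have A: "gcyc P (take (Suc j) ws)"
    unfolding gcyc_def
  proof (intro conjI allI impI)
    show "distinct (take (Suc j) ws)" using dw by simp
    show "3 \<le> length (take (Suc j) ws)" using j by simp
    fix m assume m: "m < length (take (Suc j) ws)"
    hence m': "m \<le> j" using j by simp
    have lt: "length (take (Suc j) ws) = Suc j" using j by simp
    show "P (take (Suc j) ws ! m) (take (Suc j) ws ! (Suc m mod length (take (Suc j) ws)))"
    proof (cases "m = j")
      case True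
      then show ?thesis using p2 lt by simp
    next
      case False
      hence "m < j" using m' by simp
      hence "Suc m mod ?k = Suc m" "Suc m mod Suc j = Suc m" using j by simp_all
      moreover have "P (ws!m) (ws!(Suc m mod ?k))" by (rule ed) (use \<open>m < j\<close> j in simp)
      ultimately show ?thesis using lt \<open>m < j\<close> by simp
    qed
  qed
  have B: "gcyc P (drop j ws @ [ws!0])"
    unfolding gcyc_def
  proof (intro conjI allI impI)
    have "ws!0 \<notin> set (drop j ws)"
    proof
      assume "ws!0 \<in> set (drop j ws)"
      then obtain t where t: "t < ?k - j" "drop j ws ! t = ws!0" by (auto simp: in_set_conv_nth)
      hence "ws!(j+t) = ws!0" using j by simp
      moreover have "j + t < ?k" "0 < ?k" using t j by auto
      ultimately have "j + t = 0" using nth_eq_iff_index_eq[OF dw] by blast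
      thus False using j by simp
    qed
    thus "distinct (drop j ws @ [ws!0])" using dw by simp
    show "3 \<le> length (drop j ws @ [ws!0])" using j by simp
    fix m assume m: "m < length (drop j ws @ [ws!0])"
    have lb: "length (drop j ws @ [ws!0]) = ?k - j + 1" by simp
    have b1: "(drop j ws @ [ws!0]) ! t = ws!(j+t)" if "t < ?k - j" for t
      using that j by (simp add: nth_append)
    have b2: "(drop j ws @ [ws!0]) ! (?k - j) = ws!0" using j by (simp add: nth_append)
    consider "Suc m < ?k - j" | "Suc m = ?k - j" | "m = ?k - j" using m lb by linarith
    then show "P ((drop j ws @ [ws!0]) ! m) ((drop j ws @ [ws!0]) ! (Suc m mod length (drop j ws @ [ws!0])))"
    proof cases
      case 1
      hence "Suc m mod (?k - j + 1) = Suc m" by simp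
      moreover have "Suc (j+m) mod ?k = Suc (j + m)" using 1 by simp
      moreover have "P (ws!(j+m)) (ws!(Suc (j+m) mod ?k))" by (rule ed) (use 1 in simp)
      ultimately show ?thesis using b1 1 lb by simp
    next
      case 2
      hence "Suc m mod (?k - j + 1) = Suc m" by simp
      moreover have "j + m = ?k - 1" using 2 j by simp
      moreover have "Suc (?k - 1) = ?k" using k3 by simp
      hence "Suc (?k - 1) mod ?k = 0" by simp
      moreover have "P (ws!(?k-1)) (ws!(Suc (?k-1) mod ?k))" by (rule ed) (use k3 in simp)
      ultimately show ?thesis using b1[of m] b2 2 lb by simp
    next
      case 3
      hence "Suc m mod (?k - j + 1) = 0" by simp
      thus ?thesis using b2 b1[of 0] 3 lb p1 j by simp
    qed
  qed
  show ?thesis using A B by blast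
qed

lemma rot_idx:
  assumes "a < k" "b < k" "a \<noteq> b" "b \<noteq> Suc a mod k" "a \<noteq> Suc b mod k"
  shows "\<exists>j. 2 \<le> j \<and> j + 2 \<le> k \<and> (a + j) mod k = b"
proof (cases "a < b")
  case True
  have "Suc a mod k = Suc a" using True assms(2) by simp
  hence b1: "b \<ge> a + 2" using True assms(4) by simp
  have "b - a + 2 \<le> k"
  proof (cases "b = k - 1")
    case True
    hence "Suc b mod k = 0" using assms(2) by simp
    hence "a \<noteq> 0" using assms(5) by simp
    thus ?thesis using True b1 by simp
  next
    case False
    thus ?thesis using assms(2) b1 by simp
  qed
  moreover have "(a + (b - a)) mod k = b" using True assms(2) by simp
  ultimately show ?thesis using b1 by (intro exI[of _ "b - a"]) auto
next
  case False
  hence ba: "b < a" using assms(3) by simp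
  have "Suc b mod k = Suc b" using ba assms(1) by simp
  hence b1: "a \<ge> b + 2" using ba assms(5) by simp
  have "2 \<le> b + k - a"
  proof (cases "b = 0")
    case True
    have "a \<noteq> k - 1"
    proof
      assume "a = k - 1"
      hence "Suc a mod k = 0" using assms(1) by simp
      thus False using assms(4) True by simp
    qed
    thus ?thesis using assms(1) by simp
  next
    case False
    thus ?thesis using assms(1) by simp
  qed
  moreover have "(a + (b + k - a)) mod k = b" using ba assms(1) by simp
  ultimately show ?thesis using b1 assms(1) by (intro exI[of _ "b + k - a"]) auto
qed

lemma chord_short:
  assumes g: "gcyc P ws" and od: "odd (length ws)"
    and ab: "a < length ws" "b < length ws" "a \<noteq> b" "b \<noteq> Suc a mod length ws" "a \<noteq> Suc b mod length ws"
    and p1: "P (ws!a) (ws!b)" and p2: "P (ws!b) (ws!a)"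
  shows "\<exists>ws'. gcyc P ws' \<and> odd (length ws') \<and> length ws' < length ws \<and> set ws' \<subseteq> set ws"
proof -
  let ?k = "length ws"
  obtain j where j: "2 \<le> j" "j + 2 \<le> ?k" "(a + j) mod ?k = b" using rot_idx[OF ab] by blast
  define ws2 where "ws2 = rotate a ws"
  have g2: "gcyc P ws2" using gcyc_rotate[OF g] unfolding ws2_def .
  have l2: "length ws2 = ?k" unfolding ws2_def by simp
  have kp: "0 < ?k" using ab(1) by linarith
  have e0: "ws2!0 = ws!a" unfolding ws2_def using nth_rotate[of 0 ws a] kp ab by simp
  have ej: "ws2!j = ws!b" unfolding ws2_def using nth_rotate[of j ws a] j by simp
  have sp: "gcyc P (take (Suc j) ws2) \<and> gcyc P (drop j ws2 @ [ws2!0])"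
    using chord_split0[OF g2] j l2 e0 ej p1 p2 by simp
  have s2: "set ws2 = set ws" unfolding ws2_def by simp
  have st: "set (take (Suc j) ws2) \<subseteq> set ws" "set (drop j ws2 @ [ws2!0]) \<subseteq> set ws"
    using s2 set_take_subset[of "Suc j" ws2] set_drop_subset[of j ws2] l2 kp by (auto simp: e0 ab)
  show ?thesis
  proof (cases "odd (Suc j)")
    case True
    thus ?thesis using sp st j l2 by (intro exI[of _ "take (Suc j) ws2"]) auto
  next
    case False
    hence "odd (?k - j + 1)" using od j(1,2) by presburger
    thus ?thesis using sp st j l2 by (intro exI[of _ "drop j ws2 @ [ws2!0]"]) auto
  qed
qed

lemma ce_idx:
  assumes dw: "distinct hs" and pq: "p < length hs" "q < length hs"
    and e: "{hs!p, hs!q} \<in> cycle_edges hs"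
  shows "q = Suc p mod length hs \<or> p = Suc q mod length hs"
proof -
  let ?k = "length hs"
  obtain i where i: "i < ?k" "{hs!p, hs!q} = {hs!i, hs!(Suc i mod ?k)}"
    using e unfolding cycle_edges_eq by blast
  have si: "Suc i mod ?k < ?k" using i(1) by (intro mod_less_divisor) linarith
  from i(2) have "(hs!p = hs!i \<and> hs!q = hs!(Suc i mod ?k)) \<or> (hs!p = hs!(Suc i mod ?k) \<and> hs!q = hs!i)"
    by (auto simp: doubleton_eq_iff)
  thus ?thesis using nth_eq_iff_index_eq[OF dw] pq i(1) si by metis
qed

lemma tri_free:
  assumes dw: "distinct hs" and k4: "4 \<le> length hs"
    and pqr: "p < length hs" "q < length hs" "r < length hs" "p \<noteq> q" "q \<noteq> r" "p \<noteq> r"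
    and e: "{hs!p, hs!q} \<in> cycle_edges hs" "{hs!q, hs!r} \<in> cycle_edges hs" "{hs!p, hs!r} \<in> cycle_edges hs"
  shows False
proof -
  let ?k = "length hs"
  have c: "\<And>a b. a < ?k \<Longrightarrow> b < ?k \<Longrightarrow> {hs!a, hs!b} \<in> cycle_edges hs \<Longrightarrow>
     b = Suc a \<or> a = Suc b \<or> (a = ?k - 1 \<and> b = 0) \<or> (b = ?k - 1 \<and> a = 0)"
  proof -
    fix a b assume ab: "a < ?k" "b < ?k" "{hs!a, hs!b} \<in> cycle_edges hs"
    from ce_idx[OF dw ab] show "b = Suc a \<or> a = Suc b \<or> (a = ?k - 1 \<and> b = 0) \<or> (b = ?k - 1 \<and> a = 0)"
      using ab(1,2) by (auto simp: suc_mod split: if_splits)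
  qed
  have 1: "q = Suc p \<or> p = Suc q \<or> (p = ?k - 1 \<and> q = 0) \<or> (q = ?k - 1 \<and> p = 0)" using c pqr e by blast
  have 2: "r = Suc q \<or> q = Suc r \<or> (q = ?k - 1 \<and> r = 0) \<or> (r = ?k - 1 \<and> q = 0)" using c pqr e by blast
  have 3: "r = Suc p \<or> p = Suc r \<or> (p = ?k - 1 \<and> r = 0) \<or> (r = ?k - 1 \<and> p = 0)" using c pqr e by blast
  show False using 1 2 3 pqr k4 by linarith
qed

lemma hole_ocyc:
  assumes g: "graph V E" and SV: "S \<subseteq> V" and dh: "distinct hs" and sh: "set hs = S"
    and k5: "5 \<le> length hs" and od: "odd (length hs)"
    and cf: "induced_edges F S = cycle_edges hs" and FE: "F \<subseteq> E"
    and tri: "\<And>x y z. {x,y} \<in> F \<Longrightarrow> adj E x z \<Longrightarrow> adj E y z \<Longrightarrow> {x,z} \<in> F \<and> {y,z} \<in> F"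
  shows "ocyc V E hs"
proof -
  let ?k = "length hs"
  have "gcyc (okp E S) hs"
    unfolding gcyc_def
  proof (intro conjI allI impI)
    show "distinct hs" by fact
    show "3 \<le> ?k" using k5 by simp
    fix i assume i: "i < ?k"
    have si: "Suc i mod ?k < ?k" using i by (intro mod_less_divisor) linarith
    let ?x = "hs!i" and ?y = "hs!(Suc i mod ?k)"
    have ce: "{?x, ?y} \<in> cycle_edges hs" unfolding cycle_edges_eq using i by blast
    hence xyF: "{?x,?y} \<in> F" using cf unfolding induced_edges_def by blast
    have "\<not> (\<exists>z\<in>S. adj E ?x z \<and> adj E ?y z)"
    proof
      assume "\<exists>z\<in>S. adj E ?x z \<and> adj E ?y z"
      then obtain z where z: "z \<in> S" "adj E ?x z" "adj E ?y z" by blast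
      obtain r where r: "r < ?k" "z = hs!r" using z(1) sh by (auto simp: in_set_conv_nth)
      have zn: "z \<noteq> ?x" "z \<noteq> ?y" using z graph_no_loop[OF g] by metis+
      have F2: "{?x,z} \<in> F" "{?y,z} \<in> F" using tri[OF xyF z(2,3)] by auto
      have inS: "?x \<in> S" "?y \<in> S" using i si sh by auto
      have "{?x,z} \<in> cycle_edges hs" "{?y,z} \<in> cycle_edges hs"
        using F2 cf inS z(1) unfolding induced_edges_def by blast+
      moreover have "i \<noteq> Suc i mod ?k" using i k5 by (auto simp: suc_mod split: if_splits)
      moreover have "i \<noteq> r" "Suc i mod ?k \<noteq> r" using zn r by auto
      ultimately show False using tri_free[OF dh _ i si r(1)] ce k5 r(2) by (simp add: insert_commute)
    qed
    thus "okp E S ?x ?y" unfolding okp_def using xyF FE by blast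
  qed
  thus ?thesis unfolding ocyc_def using sh od SV by simp
qed

lemma rim_closed:
  assumes dv: "distinct vs" and L3: "3 \<le> length vs" and dw: "distinct ws" and k3: "3 \<le> length ws"
    and sub: "set ws \<subseteq> set vs"
    and rim: "\<forall>i<length ws. {ws!i, ws!(Suc i mod length ws)} \<in> cycle_edges vs"
  shows "set ws = set vs"
proof -
  let ?L = "length vs" and ?k = "length ws"
  have step: "vs!(Suc a mod ?L) \<in> set ws" if a: "a < ?L" "vs!a \<in> set ws" for a
  proof -
    obtain j where j: "j < ?k" "ws!j = vs!a" using a(2) by (auto simp: in_set_conv_nth)
    define jp where "jp = (if j = 0 then ?k - 1 else j - 1)"
    have jpk: "jp < ?k" using j k3 unfolding jp_def by auto
    have sjp: "Suc jp mod ?k = j" using prev_idx[OF j(1) jpk] jp_def by simp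
    have jnk: "Suc j mod ?k < ?k" using j(1) by (intro mod_less_divisor) linarith
    have jnp: "Suc j mod ?k \<noteq> jp" using j k3 unfolding jp_def by (auto simp: suc_mod split: if_splits)
    have e1: "{vs!a, ws!(Suc j mod ?k)} \<in> cycle_edges vs" using rim j by metis
    have e2: "{ws!jp, vs!a} \<in> cycle_edges vs" using rim jpk sjp j by metis
    have "ws!(Suc j mod ?k) \<in> set vs" using sub jnk nth_mem by blast
    then obtain q1 where q1: "q1 < ?L" "ws!(Suc j mod ?k) = vs!q1"
      by (auto simp: in_set_conv_nth)
    have "ws!jp \<in> set vs" using sub jpk nth_mem by blast
    then obtain q2 where q2: "q2 < ?L" "ws!jp = vs!q2"
      by (auto simp: in_set_conv_nth)
    have q12: "q1 \<noteq> q2" using q1 q2 jnp dw jnk jpk nth_eq_iff_index_eq by metis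
    have c1: "q1 = Suc a mod ?L \<or> a = Suc q1 mod ?L" using ce_idx[OF dv a(1) q1(1)] e1 q1(2) by simp
    have c2: "q2 = Suc a mod ?L \<or> a = Suc q2 mod ?L"
      using ce_idx[OF dv q2(1) a(1)] e2 q2(2) by auto
    show ?thesis
    proof (cases "q1 = Suc a mod ?L")
      case True
      thus ?thesis using q1 jnk by (metis nth_mem)
    next
      case False
      show ?thesis
      proof (cases "q2 = Suc a mod ?L")
        case True
        thus ?thesis using q2 jpk by (metis nth_mem)
      next
        case False
        hence "a = Suc q1 mod ?L" "a = Suc q2 mod ?L" using c1 c2 \<open>q1 \<noteq> Suc a mod ?L\<close> by auto
        hence "q1 = q2" using prev_idx[OF a(1) q1(1)] prev_idx[OF a(1) q2(1)] by simp
        thus ?thesis using q12 by simp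
      qed
    qed
  qed
  obtain a0 where a0: "a0 < ?L" "vs!a0 \<in> set ws"
    using sub k3 by (metis in_set_conv_nth length_greater_0_conv list.size(3) not_numeral_le_zero nth_mem subsetD)
  have all: "vs!((a0 + n) mod ?L) \<in> set ws" for n
  proof (induction n)
    case 0 thus ?case using a0 by simp
  next
    case (Suc n)
    have "(a0 + n) mod ?L < ?L" using L3 by (intro mod_less_divisor) linarith
    from step[OF this Suc] show ?case by (simp add: mod_Suc_eq)
  qed
  have "set vs \<subseteq> set ws"
  proof
    fix x assume "x \<in> set vs"
    then obtain b where b: "b < ?L" "x = vs!b" by (auto simp: in_set_conv_nth)
    have "(a0 + (b + ?L - a0)) mod ?L = b" using b a0 by simp
    thus "x \<in> set ws" using all[of "b + ?L - a0"] b by simp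
  qed
  thus ?thesis using sub by blast
qed

lemma MU_iff:
  assumes g: "graph V E" and df: "diamond_free V E"
  shows "minimally_unbalanced V E \<longleftrightarrow>
    (\<exists>ws. ocyc V E ws \<and> set ws = V) \<and> \<not> (\<exists>ws. ocyc V E ws \<and> set ws \<subset> V)"
proof
  assume mu: "minimally_unbalanced V E"
  have nb: "\<not> balanced_graph V (induced_edges E V)"
    using mu graph_induced_all[OF g] unfolding minimally_unbalanced_def by simp
  have no: "\<not> (\<exists>ws. ocyc V E ws \<and> set ws \<subset> V)"
  proof
    assume "\<exists>ws. ocyc V E ws \<and> set ws \<subset> V"
    then obtain ws where "ocyc V E ws" "set ws \<subset> V" by blast
    thus False using cyc_unbal[OF g] mu unfolding minimally_unbalanced_def by blast
  qed
  obtain ws where "ocyc V E ws" "set ws \<subseteq> V" using extract_cyc[OF g df _ nb] by blast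
  hence "ocyc V E ws \<and> set ws = V" using no by blast
  thus "(\<exists>ws. ocyc V E ws \<and> set ws = V) \<and> \<not> (\<exists>ws. ocyc V E ws \<and> set ws \<subset> V)" using no by blast
next
  assume h: "(\<exists>ws. ocyc V E ws \<and> set ws = V) \<and> \<not> (\<exists>ws. ocyc V E ws \<and> set ws \<subset> V)"
  then obtain ws where ws: "ocyc V E ws" "set ws = V" by blast
  have "\<not> balanced_graph V E" using cyc_unbal[OF g ws(1)] ws(2) graph_induced_all[OF g] by simp
  moreover have "balanced_graph S (induced_edges E S)" if hS: "S \<subset> V" for S
  proof (rule ccontr)
    assume "\<not> balanced_graph S (induced_edges E S)"
    then obtain ws' where "ocyc V E ws'" "set ws' \<subseteq> S" using extract_cyc[OF g df] hS by blast
    thus False using h hS by blast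
  qed
  ultimately show "minimally_unbalanced V E" unfolding minimally_unbalanced_def by blast
qed

lemma edge_ne: "graph V E \<Longrightarrow> {x,y} \<in> E \<Longrightarrow> x \<noteq> y"
  unfolding graph_def by fastforce

lemma edge_in: "graph V E \<Longrightarrow> {x,y} \<in> E \<Longrightarrow> x \<in> V \<and> y \<in> V"
  unfolding graph_def by blast

lemma edge_max:
  assumes g: "graph V E" and e: "{x,y} \<in> E"
  shows "\<exists>Q. maximal_clique V E Q \<and> {x,y} \<subseteq> Q"
proof -
  have "is_clique V E {x,y}"
    unfolding is_clique_def using edge_in[OF g e] e by (auto simp: adj_def insert_commute)
  moreover have "finite V" using g unfolding graph_def by blast
  ultimately show ?thesis using ExMax by blast
qed

lemma max_nocommon:
  assumes g: "graph V E" and m: "maximal_clique V E {u,v}" and a: "adj E u z" "adj E v z"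
  shows False
proof -
  have z: "z \<noteq> u" "z \<noteq> v" using a graph_no_loop[OF g] by metis+
  have zV: "z \<in> V" using graph_adj_in[OF g a(1)] by blast
  have c: "is_clique V E {u,v}" using m unfolding maximal_clique_def by blast
  have "is_clique V E (insert z {u,v})"
    unfolding is_clique_def
  proof (intro conjI ballI impI)
    show "insert z {u,v} \<subseteq> V" using c zV unfolding is_clique_def by blast
    fix p q assume pq: "p \<in> insert z {u,v}" "q \<in> insert z {u,v}" "p \<noteq> q"
    show "adj E p q"
    proof (cases "p = z \<or> q = z")
      case True
      thus ?thesis using pq a adj_sym[of E] by auto
    next
      case False
      thus ?thesis using pq c unfolding is_clique_def by auto
    qed
  qed
  hence "insert z {u,v} = {u,v}" using m unfolding maximal_clique_def by blast
  thus False using z by auto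
qed

lemma nocommon_max:
  assumes g: "graph V E" and e: "{x,y} \<in> E" and n: "\<not> (\<exists>z\<in>V. adj E x z \<and> adj E y z)"
  shows "maximal_clique V E {x,y}"
proof -
  have c: "is_clique V E {x,y}"
    unfolding is_clique_def using edge_in[OF g e] e by (auto simp: adj_def insert_commute)
  moreover have "K' = {x,y}" if h: "is_clique V E K'" "{x,y} \<subseteq> K'" for K'
  proof (rule ccontr)
    assume "K' \<noteq> {x,y}"
    then obtain z where z: "z \<in> K'" "z \<noteq> x" "z \<noteq> y" using h(2) by blast
    have "z \<in> V" "adj E x z" "adj E y z" using h z unfolding is_clique_def by auto
    thus False using n by blast
  qed
  ultimately show ?thesis unfolding maximal_clique_def by blast
qed

lemma ocyc_consec:
  assumes "ocyc V E ws" "i < length ws"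
  shows "okp E (set ws) (ws!i) (ws!(Suc i mod length ws))"
  using assms unfolding ocyc_def gcyc_def by blast

lemma not3:
  assumes g: "graph V E" and oc: "ocyc V E ws"
  shows "length ws \<noteq> 3"
proof
  assume k: "length ws = 3"
  have o0: "okp E (set ws) (ws!0) (ws!1)" using ocyc_consec[OF oc, of 0] k by simp
  have o1: "okp E (set ws) (ws!1) (ws!2)" using ocyc_consec[OF oc, of 1] k by (simp add: numeral_2_eq_2)
  have o2: "okp E (set ws) (ws!2) (ws!0)" using ocyc_consec[OF oc, of 2] k by simp
  have "ws!2 \<in> set ws" using k by simp
  moreover have "adj E (ws!0) (ws!2)" "adj E (ws!1) (ws!2)"
    using o1 o2 unfolding okp_def adj_def by (auto simp: insert_commute)
  ultimately show False using o0 unfolding okp_def by blast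
qed

lemma chord_shorter:
  assumes oc: "ocyc V E ws" and ab: "a < length ws" "b < length ws" "a \<noteq> b"
    and nc: "{ws!a, ws!b} \<notin> cycle_edges ws" and e: "{ws!a, ws!b} \<in> E"
    and n: "\<not> (\<exists>z\<in>set ws. adj E (ws!a) z \<and> adj E (ws!b) z)"
  shows "\<exists>ws'. ocyc V E ws' \<and> length ws' < length ws \<and> set ws' \<subseteq> set ws"
proof -
  let ?k = "length ws"
  have gc: "gcyc (okp E (set ws)) ws" and od: "odd ?k" and sV: "set ws \<subseteq> V"
    using oc unfolding ocyc_def by auto
  have n1: "b \<noteq> Suc a mod ?k"
  proof
    assume "b = Suc a mod ?k"
    hence "{ws!a, ws!b} \<in> cycle_edges ws" using ab unfolding cycle_edges_eq by blast
    thus False using nc by simp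
  qed
  have n2: "a \<noteq> Suc b mod ?k"
  proof
    assume "a = Suc b mod ?k"
    hence "{ws!b, ws!a} \<in> cycle_edges ws" using ab unfolding cycle_edges_eq by blast
    thus False using nc by (simp add: insert_commute)
  qed
  have p1: "okp E (set ws) (ws!a) (ws!b)" using e n unfolding okp_def by blast
  have p2: "okp E (set ws) (ws!b) (ws!a)" using okp_sym[OF p1] .
  obtain ws' where ws': "gcyc (okp E (set ws)) ws'" "odd (length ws')" "length ws' < ?k" "set ws' \<subseteq> set ws"
    using chord_short[OF gc od ab n1 n2 p1 p2] by blast
  have "gcyc (okp E (set ws')) ws'" by (rule gcyc_mono[OF ws'(1)]) (erule okp_mono[OF _ ws'(4)])
  hence "ocyc V E ws'" unfolding ocyc_def using ws' sV by blast
  thus ?thesis using ws' by blast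
qed

lemma shorter_proper:
  assumes "ocyc V E ws" "set ws = V" "ocyc V E ws'" "length ws' < length ws" "set ws' \<subseteq> set ws"
  shows "set ws' \<subset> V"
proof -
  have "card (set ws') = length ws'" "card (set ws) = length ws"
    using assms unfolding ocyc_def gcyc_def by (auto simp: distinct_card)
  thus ?thesis using assms(2,4,5) by auto
qed

lemma two_in_max:
  assumes g: "graph V E" and m: "maximal_clique V E P" and ed: "\<forall>v\<in>V. \<exists>w. {v,w} \<in> E" and ne: "V \<noteq> {}"
  shows "\<exists>u v. u \<in> P \<and> v \<in> P \<and> u \<noteq> v"
proof -
  have Pne: "P \<noteq> {}"
  proof
    assume P0: "P = {}"
    obtain v where v: "v \<in> V" using ne by blast
    have "is_clique V E {v}" unfolding is_clique_def using v by auto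
    hence "{v} = P" using m P0 unfolding maximal_clique_def by blast
    thus False using P0 by simp
  qed
  then obtain u where u: "u \<in> P" by blast
  have uV: "u \<in> V" using m u unfolding maximal_clique_def is_clique_def by blast
  obtain w where w: "{u,w} \<in> E" using ed uV by blast
  have uw: "u \<noteq> w" using edge_ne[OF g w] .
  have "P \<noteq> {u}"
  proof
    assume Pu: "P = {u}"
    have "is_clique V E {u,w}"
      unfolding is_clique_def using edge_in[OF g w] w by (auto simp: adj_def insert_commute)
    hence "{u,w} = P" using m Pu unfolding maximal_clique_def by blast
    thus False using Pu uw by auto
  qed
  then obtain v where "v \<in> P" "v \<noteq> u" using u by blast
  thus ?thesis using u by blast
qed

lemma fwd:
  assumes g: "graph V E" and df: "diamond_free V E" and oc: "ocyc V E ws" and sv: "set ws = V"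
    and no: "\<not> (\<exists>ws'. ocyc V E ws' \<and> set ws' \<subset> V)"
  shows "odd_hole V E \<or> (multisun V E \<and> HOH_free V E)"
proof -
  let ?k = "length ws"
  have dw: "distinct ws" and k3: "3 \<le> ?k" and od: "odd ?k"
    using oc unfolding ocyc_def gcyc_def by auto
  have finV: "finite V" using g unfolding graph_def by blast
  have cV: "card V = ?k" using sv distinct_card[OF dw] by simp
  have okc: "okp E V (ws!i) (ws!(Suc i mod ?k))" if "i < ?k" for i
    using ocyc_consec[OF oc that] sv by simp
  have rimE: "cycle_edges ws \<subseteq> E"
  proof
    fix e assume "e \<in> cycle_edges ws"
    then obtain i where "i < ?k" "e = {ws!i, ws!(Suc i mod ?k)}" unfolding cycle_edges_eq by blast
    thus "e \<in> E" using okc unfolding okp_def by blast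
  qed
  have rimmax: "maximal_clique V E e" if he: "e \<in> cycle_edges ws" for e
  proof -
    obtain i where i: "i < ?k" "e = {ws!i, ws!(Suc i mod ?k)}" using he unfolding cycle_edges_eq by blast
    thus ?thesis using nocommon_max[OF g] okc[OF i(1)] unfolding okp_def by blast
  qed
  have nochord: "\<exists>z\<in>V. adj E x z \<and> adj E y z"
    if xy: "x \<in> V" "y \<in> V" "{x,y} \<in> E" "{x,y} \<notin> cycle_edges ws" for x y
  proof (rule ccontr)
    assume nz: "\<not> (\<exists>z\<in>V. adj E x z \<and> adj E y z)"
    obtain a where a: "a < ?k" "x = ws!a" using xy(1) sv by (auto simp: in_set_conv_nth)
    obtain b where b: "b < ?k" "y = ws!b" using xy(2) sv by (auto simp: in_set_conv_nth)
    have ab: "a \<noteq> b" using edge_ne[OF g xy(3)] a b by auto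
    have nc: "{ws!a, ws!b} \<notin> cycle_edges ws" using xy(4) a b by simp
    have e: "{ws!a,ws!b} \<in> E" using xy(3) a b by simp
    have n: "\<not>(\<exists>z\<in>set ws. adj E (ws!a) z \<and> adj E (ws!b) z)" using nz a b sv by simp
    obtain ws' where "ocyc V E ws'" "length ws' < ?k" "set ws' \<subseteq> set ws"
      using chord_shorter[OF oc a(1) b(1) ab nc e n] by blast
    thus False using shorter_proper[OF oc sv] no by blast
  qed
  have ins: "{u,v} \<notin> cycle_edges ws"
    if K: "maximal_clique V E K" "card K \<noteq> 2" "u \<in> K" "v \<in> K" "u \<noteq> v" for K u v
  proof
    assume uv: "{u,v} \<in> cycle_edges ws"
    have "is_clique V E K" "{u,v} \<subseteq> K" using K unfolding maximal_clique_def by auto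
    hence "K = {u,v}" using rimmax[OF uv] unfolding maximal_clique_def by blast
    thus False using K by simp
  qed
  have ms: "multisun V E"
    unfolding multisun_def
  proof (intro conjI exI[of _ ws])
    show "diamond_free V E" by fact
    show "odd (card V)" using cV od by simp
    show "distinct ws" "set ws = V" "3 \<le> ?k" "cycle_edges ws \<subseteq> E" using dw sv k3 rimE by auto
    show "{K. maximal_clique V E K \<and> card K = 2} = cycle_edges ws"
    proof (intro set_eqI iffI)
      fix K assume "K \<in> {K. maximal_clique V E K \<and> card K = 2}"
      hence K: "maximal_clique V E K" "card K = 2" by auto
      then obtain x y where xy: "K = {x,y}" "x \<noteq> y" unfolding card_2_iff by blast
      have "is_clique V E K" using K unfolding maximal_clique_def by blast
      hence xyE: "{x,y} \<in> E" "x \<in> V" "y \<in> V" using xy unfolding is_clique_def adj_def by auto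
      show "K \<in> cycle_edges ws"
      proof (rule ccontr)
        assume "K \<notin> cycle_edges ws"
        then obtain z where "z \<in> V" "adj E x z" "adj E y z" using nochord xyE xy by blast
        thus False using max_nocommon[OF g] K xy by blast
      qed
    next
      fix K assume Kc: "K \<in> cycle_edges ws"
      then obtain i where i: "i < ?k" "K = {ws!i, ws!(Suc i mod ?k)}" unfolding cycle_edges_eq by blast
      have "card K = 2" using edge_ne[OF g] rimE Kc i by auto
      thus "K \<in> {K. maximal_clique V E K \<and> card K = 2}" using rimmax[OF Kc] by blast
    qed
    show "\<forall>K. maximal_clique V E K \<and> card K \<noteq> 2 \<longrightarrow>
        (\<forall>u\<in>K. \<forall>v\<in>K. u \<noteq> v \<longrightarrow> {u, v} \<notin> cycle_edges ws)" using ins by blast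
  qed
  show ?thesis
  proof (cases "odd_hole V E")
    case True thus ?thesis by blast
  next
    case noh: False
    have h1: "\<not> contains_odd_hole V E"
    proof
      assume "contains_odd_hole V E"
      then obtain S hs where S: "S \<subseteq> V" "distinct hs" "set hs = S" "5 \<le> length hs" "odd (length hs)"
        "induced_edges E S = cycle_edges hs"
        unfolding contains_odd_hole_def odd_hole_def by blast
      have "ocyc V E hs"
        by (rule hole_ocyc[OF g S(1-6)]) (auto simp: adj_def)
      show False
      proof (cases "S = V")
        case True
        hence "odd_hole V E" using S graph_induced_all[OF g] unfolding odd_hole_def by metis
        thus False using noh by simp
      next
        case False
        thus False using no \<open>ocyc V E hs\<close> S by blast
      qed
    qed
    have h2: "\<not> contains_odd_hole V E'" if sm: "sub_multisun_edges V E E'" for E'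
    proof
      assume "contains_odd_hole V E'"
      then obtain S hs where S: "S \<subseteq> V" "distinct hs" "set hs = S" "5 \<le> length hs" "odd (length hs)"
        "induced_edges E' S = cycle_edges hs"
        unfolding contains_odd_hole_def odd_hole_def by blast
      obtain D where D: "D \<noteq> {}" "D \<subset> inscribed_cliques V E" "E' = E - \<Union> (clique_edges ` D)"
        using sm unfolding sub_multisun_edges_def by blast
      have Dmax: "maximal_clique V E Q" if "Q \<in> D" for Q
        using D(2) that unfolding inscribed_cliques_def by blast
      have E'E: "E' \<subseteq> E" using D(3) by blast
      have rem: "\<exists>Q\<in>D. e \<subseteq> Q" if "e \<in> E" "e \<notin> E'" for e
        using that D(3) unfolding clique_edges_def by blast
      have tri: "{x,z} \<in> E' \<and> {y,z} \<in> E'" if t: "{x,y} \<in> E'" "adj E x z" "adj E y z" for x y z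
      proof -
        have xyE: "{x,y} \<in> E" using t E'E by blast
        have xy: "x \<noteq> y" using edge_ne[OF g xyE] .
        have zn: "z \<noteq> x" "z \<noteq> y" using t graph_no_loop[OF g] by metis+
        have zV: "z \<in> V" using graph_adj_in[OF g t(2)] by blast
        have "is_clique V E {x,y,z}"
          unfolding is_clique_def
        proof (intro conjI ballI impI)
          show "{x,y,z} \<subseteq> V" using edge_in[OF g xyE] zV by auto
          fix u v assume uv: "u \<in> {x,y,z}" "v \<in> {x,y,z}" "u \<noteq> v"
          have axy: "adj E x y" using xyE unfolding adj_def .
          show "adj E u v" using uv axy t(2,3) adj_sym[of E] by auto
        qed
        then obtain Q where Q: "maximal_clique V E Q" "{x,y,z} \<subseteq> Q" using ExMax[OF finV] by blast
        have QD: "Q \<notin> D"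
        proof
          assume "Q \<in> D"
          hence "{x,y} \<in> clique_edges Q" using Q xy unfolding clique_edges_def by auto
          thus False using t(1) D(3) \<open>Q \<in> D\<close> by blast
        qed
        have keep: "{p,z} \<in> E'" if p: "p \<in> {x,y}" for p
        proof (rule ccontr)
          assume nE': "{p,z} \<notin> E'"
          have "{p,z} \<in> E" using p t unfolding adj_def by auto
          then obtain Q' where Q': "Q' \<in> D" "{p,z} \<subseteq> Q'" using rem nE' by blast
          have "p \<noteq> z" using p zn by auto
          hence "Q' = Q" using MC2[OF df Dmax[OF Q'(1)] Q(1), of p z] Q'(2) Q(2) p by auto
          thus False using Q'(1) QD by simp
        qed
        show ?thesis using keep by blast
      qed
      have ocH: "ocyc V E hs" by (rule hole_ocyc[OF g S(1-6) E'E tri])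
      show False
      proof (cases "S = V")
        case False
        thus False using no ocH S by blast
      next
        case SV: True
        have iE': "induced_edges E' V = E'"
          using E'E g unfolding induced_edges_def graph_def by blast
        have E'c: "E' = cycle_edges hs" using S(6) SV iE' by simp
        have lh: "length hs = ?k" using S(2,3) SV cV distinct_card by metis
        have sub: "cycle_edges ws \<subseteq> E'"
        proof
          fix e assume e: "e \<in> cycle_edges ws"
          show "e \<in> E'"
          proof (rule ccontr)
            assume "e \<notin> E'"
            then obtain Q where Q: "Q \<in> D" "e \<subseteq> Q" using rem rimE e by blast
            obtain i where i: "i < ?k" "e = {ws!i, ws!(Suc i mod ?k)}" using e unfolding cycle_edges_eq by blast
            have ne: "ws!i \<noteq> ws!(Suc i mod ?k)" using edge_ne[OF g] rimE e i by auto
            have "card Q \<noteq> 2" using D(2) Q(1) unfolding inscribed_cliques_def by blast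
            thus False using ins[OF Dmax[OF Q(1)]] Q i ne e by auto
          qed
        qed
        have "finite E'" using E'c unfolding cycle_edges_eq by simp
        moreover have "card (cycle_edges ws) = card E'"
          using card_cycle_edges[OF dw k3] card_cycle_edges[OF S(2)] S(4) lh E'c by simp
        ultimately have eq: "cycle_edges ws = E'" using sub card_subset_eq by blast
        obtain P where P: "P \<in> inscribed_cliques V E" "P \<notin> D" using D(2) by blast
        have Pm: "maximal_clique V E P" "card P \<noteq> 2" using P(1) unfolding inscribed_cliques_def by auto
        have edv: "\<forall>v\<in>V. \<exists>w. {v,w} \<in> E"
        proof
          fix v assume "v \<in> V"
          then obtain i where i: "i < ?k" "v = ws!i" using sv by (auto simp: in_set_conv_nth)
          have "{ws!i, ws!(Suc i mod ?k)} \<in> E" using rimE i unfolding cycle_edges_eq by blast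
          thus "\<exists>w. {v,w} \<in> E" using i by blast
        qed
        obtain u v where uv: "u \<in> P" "v \<in> P" "u \<noteq> v"
          using two_in_max[OF g Pm(1) edv] sv k3 by force
        have "{u,v} \<in> E" using Pm(1) uv unfolding maximal_clique_def is_clique_def adj_def by blast
        moreover have "{u,v} \<in> E'"
        proof (rule ccontr)
          assume "{u,v} \<notin> E'"
          from rem[OF \<open>{u,v} \<in> E\<close> this] obtain Q where Q: "Q \<in> D" "{u,v} \<subseteq> Q" by blast
          have "u \<in> Q" "v \<in> Q" using Q(2) by auto
          hence "Q = P" using MC2[OF df Dmax[OF Q(1)] Pm(1) uv(3)] uv(1,2) by blast
          thus False using Q P by simp
        qed
        hence "{u,v} \<in> cycle_edges ws" using eq by simp
        thus False using ins[OF Pm uv] by blast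
      qed
    qed
    have "HOH_free V E" unfolding HOH_free_def using h1 h2 by blast
    thus ?thesis using ms by blast
  qed
qed

lemma bwd1:
  assumes g: "graph V E" and oh: "odd_hole V E"
  shows "(\<exists>ws. ocyc V E ws \<and> set ws = V) \<and> \<not> (\<exists>ws. ocyc V E ws \<and> set ws \<subset> V)"
proof -
  obtain vs where vs: "distinct vs" "set vs = V" "5 \<le> length vs" "odd (length vs)" "E = cycle_edges vs"
    using oh unfolding odd_hole_def by blast
  have cf: "induced_edges E V = cycle_edges vs" using graph_induced_all[OF g] vs(5) by simp
  have oc: "ocyc V E vs"
    by (rule hole_ocyc[OF g subset_refl vs(1-4) cf subset_refl]) (auto simp: adj_def)
  have "set ws = V" if ws: "ocyc V E ws" for ws
  proof -
    have gw: "distinct ws" "3 \<le> length ws" "set ws \<subseteq> V" using ws unfolding ocyc_def gcyc_def by auto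
    have "\<forall>i<length ws. {ws!i, ws!(Suc i mod length ws)} \<in> cycle_edges vs"
      using ocyc_consec[OF ws] vs(5) unfolding okp_def by blast
    thus ?thesis using rim_closed[OF vs(1) _ gw(1,2)] gw(3) vs(2,3) by simp
  qed
  thus ?thesis using oc vs(2) by blast
qed

lemma bwd2:
  assumes g: "graph V E" and df: "diamond_free V E" and ms: "multisun V E" and hf: "HOH_free V E"
  shows "(\<exists>ws. ocyc V E ws \<and> set ws = V) \<and> \<not> (\<exists>ws. ocyc V E ws \<and> set ws \<subset> V)"
proof -
  have finV: "finite V" using g unfolding graph_def by blast
  obtain vs where vs: "distinct vs" "set vs = V" "3 \<le> length vs" "cycle_edges vs \<subseteq> E"
    "{K. maximal_clique V E K \<and> card K = 2} = cycle_edges vs"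
    "\<forall>K. maximal_clique V E K \<and> card K \<noteq> 2 \<longrightarrow> (\<forall>u\<in>K. \<forall>v\<in>K. u \<noteq> v \<longrightarrow> {u, v} \<notin> cycle_edges vs)"
    using ms unfolding multisun_def by (elim conjE exE) (intro that, assumption+)
  have oV: "odd (card V)" using ms unfolding multisun_def by blast
  have rimmax: "maximal_clique V E e" if "e \<in> cycle_edges vs" for e
    using vs(5) that by blast
  let ?L = "length vs"
  have ocv: "ocyc V E vs"
  proof -
    have "gcyc (okp E V) vs"
      unfolding gcyc_def
    proof (intro conjI allI impI)
      show "distinct vs" "3 \<le> ?L" using vs(1,3) by auto
      fix i assume i: "i < ?L"
      have e: "{vs!i, vs!(Suc i mod ?L)} \<in> cycle_edges vs" using i unfolding cycle_edges_eq by blast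
      show "okp E V (vs!i) (vs!(Suc i mod ?L))"
        unfolding okp_def using e vs(4) max_nocommon[OF g rimmax[OF e]] by blast
    qed
    moreover have "odd ?L" using oV vs(1,2) distinct_card by metis
    ultimately show ?thesis unfolding ocyc_def using vs(2) by simp
  qed
  have proper: False if ex: "\<exists>ws. ocyc V E ws \<and> set ws \<subset> V"
  proof -
    obtain ws where ws: "ocyc V E ws \<and> set ws \<subset> V"
      and mn: "\<forall>ws'. ocyc V E ws' \<and> set ws' \<subset> V \<longrightarrow> length ws \<le> length ws'"
      using ex_has_least_nat[of "\<lambda>ws. ocyc V E ws \<and> set ws \<subset> V" _ length] ex by blast
    let ?k = "length ws" and ?T = "set ws"
    have oc: "ocyc V E ws" and TV: "?T \<subset> V" using ws by auto
    have dw: "distinct ws" and k3: "3 \<le> ?k" and od: "odd ?k"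
      using oc unfolding ocyc_def gcyc_def by auto
    have k5: "5 \<le> ?k" using not3[OF g oc] k3 od by presburger
    have okc: "okp E ?T (ws!i) (ws!(Suc i mod ?k))" if "i < ?k" for i
      using ocyc_consec[OF oc that] .
    have norim: "{ws!a, ws!b} \<notin> cycle_edges vs"
      if ab: "a < ?k" "b < ?k" "a \<noteq> b" "{ws!a, ws!b} \<notin> cycle_edges ws" for a b
    proof
      assume r: "{ws!a, ws!b} \<in> cycle_edges vs"
      have e: "{ws!a, ws!b} \<in> E" using r vs(4) by blast
      have n: "\<not> (\<exists>z\<in>?T. adj E (ws!a) z \<and> adj E (ws!b) z)"
        using max_nocommon[OF g rimmax[OF r]] by blast
      obtain ws' where ws': "ocyc V E ws'" "length ws' < ?k" "set ws' \<subseteq> ?T"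
        using chord_shorter[OF oc ab e n] by blast
      have "set ws' \<subset> V" using ws'(3) TV by blast
      thus False using mn ws' by force
    qed
    define D where "D = {Q \<in> inscribed_cliques V E. \<exists>a<?k. \<exists>b<?k. a \<noteq> b \<and>
        {ws!a, ws!b} \<notin> cycle_edges ws \<and> ws!a \<in> Q \<and> ws!b \<in> Q}"
    have Dins: "D \<subseteq> inscribed_cliques V E" unfolding D_def by blast
    have Dmax: "maximal_clique V E Q" if "Q \<in> D" for Q
      using that unfolding D_def inscribed_cliques_def by blast
    have ce_k: "e \<in> cycle_edges ws" if "i < ?k" "e = {ws!i, ws!(Suc i mod ?k)}" for i e
      using that unfolding cycle_edges_eq by blast
    have nosub: "\<not> {ws!i, ws!(Suc i mod ?k)} \<subseteq> Q" if i: "i < ?k" and Q: "Q \<in> D" for i Q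
    proof
      assume sQ: "{ws!i, ws!(Suc i mod ?k)} \<subseteq> Q"
      obtain a b where ab: "a < ?k" "b < ?k" "a \<noteq> b" "{ws!a, ws!b} \<notin> cycle_edges ws"
        "ws!a \<in> Q" "ws!b \<in> Q" using Q unfolding D_def by blast
      have ei: "{ws!i, ws!(Suc i mod ?k)} \<in> cycle_edges ws" using ce_k[OF i refl] .
      have "\<exists>w\<in>{ws!a, ws!b}. w \<notin> {ws!i, ws!(Suc i mod ?k)}"
      proof (rule ccontr)
        assume "\<not> ?thesis"
        hence sub: "{ws!a, ws!b} \<subseteq> {ws!i, ws!(Suc i mod ?k)}" by blast
        have "ws!a \<noteq> ws!b" using ab dw nth_eq_iff_index_eq by metis
        hence "{ws!a, ws!b} = {ws!i, ws!(Suc i mod ?k)}" using sub by auto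
        thus False using ab(4) ei by simp
      qed
      then obtain w where w: "w \<in> {ws!a, ws!b}" "w \<noteq> ws!i" "w \<noteq> ws!(Suc i mod ?k)" by blast
      have wT: "w \<in> ?T" using w ab by auto
      have wQ: "w \<in> Q" using w ab by auto
      have cQ: "is_clique V E Q" using Dmax[OF Q] unfolding maximal_clique_def by blast
      have "adj E (ws!i) w" "adj E (ws!(Suc i mod ?k)) w"
        using cQ sQ wQ w unfolding is_clique_def by auto
      thus False using okc[OF i] wT unfolding okp_def by blast
    qed
    have chordD: "\<exists>Q\<in>D. {ws!a, ws!b} \<subseteq> Q"
      if ab: "a < ?k" "b < ?k" "a \<noteq> b" "{ws!a, ws!b} \<notin> cycle_edges ws" "{ws!a, ws!b} \<in> E" for a b
    proof -
      obtain Q where Q: "maximal_clique V E Q" "{ws!a, ws!b} \<subseteq> Q" using edge_max[OF g ab(5)] by blast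
      have "card Q \<noteq> 2"
      proof
        assume c2: "card Q = 2"
        have fQ: "finite Q" using Q(1) finV unfolding maximal_clique_def is_clique_def
          by (meson finite_subset)
        have "ws!a \<noteq> ws!b" using ab dw nth_eq_iff_index_eq by metis
        hence "card {ws!a, ws!b} = 2" by simp
        hence "{ws!a, ws!b} = Q" using card_subset_eq[OF fQ Q(2)] c2 by simp
        hence "{ws!a, ws!b} \<in> cycle_edges vs" using vs(5) Q(1) c2 by blast
        thus False using norim[OF ab(1-4)] by simp
      qed
      hence "Q \<in> inscribed_cliques V E" using Q(1) unfolding inscribed_cliques_def by blast
      hence "Q \<in> D" unfolding D_def using ab Q(2) by blast
      thus ?thesis using Q(2) by blast
    qed
    have edge_form: "\<exists>a<?k. \<exists>b<?k. a \<noteq> b \<and> e = {ws!a, ws!b}" if he: "e \<in> E" "e \<subseteq> ?T" for e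
    proof -
      have "card e = 2" using g he(1) unfolding graph_def by blast
      then obtain x y where xy: "e = {x,y}" "x \<noteq> y" unfolding card_2_iff by blast
      obtain a where a: "a < ?k" "x = ws!a" using he(2) xy by (auto simp: in_set_conv_nth)
      obtain b where b: "b < ?k" "y = ws!b" using he(2) xy by (auto simp: in_set_conv_nth)
      show ?thesis using a b xy by blast
    qed
    have eiE: "{ws!i, ws!(Suc i mod ?k)} \<in> E" if "i < ?k" for i
      using okc[OF that] unfolding okp_def by blast
    have eiT: "{ws!i, ws!(Suc i mod ?k)} \<subseteq> ?T" if "i < ?k" for i
    proof -
      have "Suc i mod ?k < ?k" using that by (intro mod_less_divisor) linarith
      thus ?thesis using that by simp
    qed
    have TV': "?T \<subseteq> V" using TV by blast
    consider "D = {}" | "D = inscribed_cliques V E" | "D \<noteq> {}" "D \<subset> inscribed_cliques V E"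
      using Dins by blast
    then show False
    proof cases
      case 1
      have "induced_edges E ?T = cycle_edges ws"
      proof (intro set_eqI iffI)
        fix e assume "e \<in> induced_edges E ?T"
        hence e: "e \<in> E" "e \<subseteq> ?T" unfolding induced_edges_def by auto
        obtain a b where ab: "a < ?k" "b < ?k" "a \<noteq> b" "e = {ws!a, ws!b}" using edge_form[OF e] by blast
        show "e \<in> cycle_edges ws"
        proof (rule ccontr)
          assume "e \<notin> cycle_edges ws"
          thus False using chordD[OF ab(1-3)] ab(4) e(1) 1 by blast
        qed
      next
        fix e assume "e \<in> cycle_edges ws"
        then obtain i where i: "i < ?k" "e = {ws!i, ws!(Suc i mod ?k)}" unfolding cycle_edges_eq by blast
        thus "e \<in> induced_edges E ?T" using eiE eiT unfolding induced_edges_def by blast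
      qed
      hence "odd_hole ?T (induced_edges E ?T)"
        unfolding odd_hole_def using dw k5 od by blast
      hence "contains_odd_hole V E"
        unfolding contains_odd_hole_def using TV' by blast
      thus False using hf unfolding HOH_free_def by blast
    next
      case 2
      have "\<forall>i<?k. {ws!i, ws!(Suc i mod ?k)} \<in> cycle_edges vs"
      proof (intro allI impI)
        fix i assume i: "i < ?k"
        obtain Q where Q: "maximal_clique V E Q" "{ws!i, ws!(Suc i mod ?k)} \<subseteq> Q"
          using edge_max[OF g eiE[OF i]] by blast
        have "Q \<notin> D" using nosub[OF i] Q(2) by blast
        hence c2: "card Q = 2" using 2 Q(1) unfolding inscribed_cliques_def by blast
        have fQ: "finite Q" using Q(1) finV unfolding maximal_clique_def is_clique_def
          by (meson finite_subset)
        have "card {ws!i, ws!(Suc i mod ?k)} = 2" using g eiE[OF i] unfolding graph_def by blast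
        hence "{ws!i, ws!(Suc i mod ?k)} = Q" using card_subset_eq[OF fQ Q(2)] c2 by simp
        thus "{ws!i, ws!(Suc i mod ?k)} \<in> cycle_edges vs" using vs(5) Q(1) c2 by blast
      qed
      hence "?T = set vs" using rim_closed[OF vs(1) vs(3) dw k3] TV' vs(2) by simp
      thus False using TV vs(2) by simp
    next
      case 3
      define E' where "E' = E - \<Union> (clique_edges ` D)"
      have sm: "sub_multisun_edges V E E'" unfolding sub_multisun_edges_def E'_def using 3 by blast
      have "induced_edges E' ?T = cycle_edges ws"
      proof (intro set_eqI iffI)
        fix e assume "e \<in> induced_edges E' ?T"
        hence e: "e \<in> E'" "e \<subseteq> ?T" unfolding induced_edges_def by auto
        hence eE: "e \<in> E" unfolding E'_def by blast
        obtain a b where ab: "a < ?k" "b < ?k" "a \<noteq> b" "e = {ws!a, ws!b}" using edge_form[OF eE e(2)] by blast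
        show "e \<in> cycle_edges ws"
        proof (rule ccontr)
          assume "e \<notin> cycle_edges ws"
          then obtain Q where Q: "Q \<in> D" "e \<subseteq> Q" using chordD[OF ab(1-3)] ab(4) eE by blast
          have "card e = 2" using g eE unfolding graph_def by blast
          hence "e \<in> clique_edges Q" using Q(2) unfolding clique_edges_def by blast
          thus False using e(1) Q(1) unfolding E'_def by blast
        qed
      next
        fix e assume "e \<in> cycle_edges ws"
        then obtain i where i: "i < ?k" "e = {ws!i, ws!(Suc i mod ?k)}" unfolding cycle_edges_eq by blast
        have "e \<notin> \<Union> (clique_edges ` D)"
        proof
          assume "e \<in> \<Union> (clique_edges ` D)"
          then obtain Q where "Q \<in> D" "e \<in> clique_edges Q" by blast
          hence "Q \<in> D" "e \<subseteq> Q" unfolding clique_edges_def by auto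
          thus False using nosub[OF i(1)] i(2) by blast
        qed
        hence "e \<in> E'" using eiE[OF i(1)] i(2) unfolding E'_def by blast
        thus "e \<in> induced_edges E' ?T" using eiT[OF i(1)] i(2) unfolding induced_edges_def by blast
      qed
      hence "odd_hole ?T (induced_edges E' ?T)"
        unfolding odd_hole_def using dw k5 od by blast
      hence "contains_odd_hole V E'"
        unfolding contains_odd_hole_def using TV' by blast
      thus False using hf sm unfolding HOH_free_def by blast
    qed
  qed
  show ?thesis using ocv vs(2) proper by blast
qed

theorem corollary1:
  fixes V :: "'a set" and E :: "'a set set"
  assumes "graph V E" and "diamond_free V E"
  shows "minimally_unbalanced V E \<longleftrightarrow> odd_hole V E \<or> (multisun V E \<and> HOH_free V E)"
proof
  assume "minimally_unbalanced V E"
  hence h: "(\<exists>ws. ocyc V E ws \<and> set ws = V) \<and> \<not> (\<exists>ws. ocyc V E ws \<and> set ws \<subset> V)"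
    using MU_iff[OF assms] by blast
  then obtain ws where "ocyc V E ws" "set ws = V" by blast
  thus "odd_hole V E \<or> (multisun V E \<and> HOH_free V E)" using fwd[OF assms] h by blast
next
  assume "odd_hole V E \<or> (multisun V E \<and> HOH_free V E)"
  hence "(\<exists>ws. ocyc V E ws \<and> set ws = V) \<and> \<not> (\<exists>ws. ocyc V E ws \<and> set ws \<subset> V)"
    using bwd1[OF assms(1)] bwd2[OF assms] by blast
  thus "minimally_unbalanced V E" using MU_iff[OF assms] by blast
qed

end
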